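(* Let $n,k\in\mathbb Z$, $\widetilde w(s,t)=w(1-s-t,t)^{-1}$ and $\breve w(s,t)=w(s,1-s-t)^{-1}$. Then: (1) if $0\le k\le n$, $\binom nk_w=\binom nk_w$; (2) if $n<0\le k$, $\binom nk_w=(-1)^k\binom{k-n-1}{k}_{\breve w}\prod_{j=1}^kW(j,-j)$; (3) if $k\le n<0$, $\binom nk_w=(-1)^{n-k}\binom{-k-1}{-n-1}_{\widetilde w}\prod_{j=1}^{n-k}W(n+1-j,j)^{-1}$; (4) if $0\le n<k$, $\binom nk_w=0$; (5) if $n<k<0$, $\binom nk_w=0$; (6) if $k<0\le n$, $\binom nk_w=0$.
   Context: $(w(s,t))_{s,t\in\mathbb Z}$ are commuting invertible variables. Product convention: $\prod_{j=l}^m A_j=A_l\cdots A_m$ if $m>l-1$, $=1$ if $m=l-1$, $=A_{l-1}^{-1}\cdots A_{m+1}^{-1}$ if $m<l-1$. For any weight family $v$, $W_v(s,t)=\prod_{j=1}^t v(s,j)$ (and $W=W_w$), and $\binom{n}{k}_v$ ($n,k\in\mathbb Z$) is the unique family with $\binom{n}{0}_v=\binom{n}{n}_v=1$ for all $n$ and $\binom{n+1}{k}_v=\binom{n}{k}_v+\binom{n}{k-1}_vW_v(k,n+1-k)$ whenever $(n+1,k)\ne(0,0)$. *)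

theory Defs
  imports Main
begin

definition prodc :: "(int \<Rightarrow> 'a::field) \<Rightarrow> int \<Rightarrow> int \<Rightarrow> 'a" where
  "prodc f l m = (if m \<ge> l - 1 then (\<Prod>j\<in>{l..m}. f j)
                  else (\<Prod>j\<in>{m+1..l-1}. inverse (f j)))"

definition Wt :: "(int \<Rightarrow> int \<Rightarrow> 'a::field) \<Rightarrow> int \<Rightarrow> int \<Rightarrow> 'a" where
  "Wt v s t = prodc (\<lambda>j. v s j) 1 t"

definition is_wbinom :: "(int \<Rightarrow> int \<Rightarrow> 'a::field) \<Rightarrow> (int \<Rightarrow> int \<Rightarrow> 'a) \<Rightarrow> bool" where
  "is_wbinom v B \<longleftrightarrow>
     (\<forall>n. B n 0 = 1) \<and> (\<forall>n. B n n = 1) \<and>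
     (\<forall>n k. (n + 1, k) \<noteq> (0, 0) \<longrightarrow>
        B (n + 1) k = B n k + B n (k - 1) * Wt v k (n + 1 - k))"

definition wbinom :: "(int \<Rightarrow> int \<Rightarrow> 'a::field) \<Rightarrow> int \<Rightarrow> int \<Rightarrow> 'a" where
  "wbinom v = (THE B. is_wbinom v B)"

definition wtilde :: "(int \<Rightarrow> int \<Rightarrow> 'a::field) \<Rightarrow> int \<Rightarrow> int \<Rightarrow> 'a" where
  "wtilde w s t = inverse (w (1 - s - t) t)"

definition wbreve :: "(int \<Rightarrow> int \<Rightarrow> 'a::field) \<Rightarrow> int \<Rightarrow> int \<Rightarrow> 'a" where
  "wbreve w s t = inverse (w s (1 - s - t))"

end

theory Submission imports Defs begin

lemma prodc_pos: "m \<ge> 0 \<Longrightarrow> prodc f 1 m = (\<Prod>j\<in>{1..m}. f j)"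
  by (simp add: prodc_def)

lemma prodc_succ: "m \<ge> 0 \<Longrightarrow> prodc f 1 (m+1) = prodc f 1 m * f (m+1)"
proof -
  assume m: "m \<ge> 0"
  have "{1..m+1} = insert (m+1) {1..m}" using m by auto
  then show ?thesis using m by (simp add: prodc_def mult.commute)
qed

lemma prodc_0: "prodc f 1 0 = 1" by (simp add: prodc_def)

lemma Wt_0: "Wt v s 0 = 1" by (simp add: Wt_def prodc_0)

lemma Wt_succ: "t \<ge> 0 \<Longrightarrow> Wt v s (t+1) = Wt v s t * v s (t+1)"
  by (simp add: Wt_def prodc_succ)

lemma Wt_pred: "t \<le> 0 \<Longrightarrow> Wt v s (t-1) = Wt v s t * inverse (v s t)"
proof -
  assume t: "t \<le> 0"
  show ?thesis
  proof (cases "t = 0")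
    case True then show ?thesis by (simp add: Wt_def prodc_def)
  next
    case False
    have "{t..0} = insert t {t+1..0}" using t by auto
    then show ?thesis using t False by (simp add: Wt_def prodc_def mult.commute)
  qed
qed

lemma Wt_nz: assumes "\<forall>s t. v s t \<noteq> 0" shows "Wt v s t \<noteq> 0"
  using assms by (simp add: Wt_def prodc_def)

fun wpas :: "(int \<Rightarrow> int \<Rightarrow> 'a::field) \<Rightarrow> nat \<Rightarrow> int \<Rightarrow> 'a" where
  "wpas v 0 k = (if k = 0 then 1 else 0)"
| "wpas v (Suc n) k = wpas v n k + wpas v n (k-1) * Wt v k (int n + 1 - k)"

lemma wpas_out: "k < 0 \<or> k > int n \<Longrightarrow> wpas v n k = 0"
  by (induction n arbitrary: k) auto

lemma wpas_0: "wpas v n 0 = 1"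
  by (induction n) (auto simp: wpas_out)

lemma wpas_diag: "wpas v n (int n) = 1"
  by (induction n) (auto simp: wpas_out Wt_0)

lemma Wb_id: "k \<ge> 0 \<Longrightarrow> Wt (wbreve v) k (int t) * Wt v k (-k) = Wt v k (-k - int t)"
proof (induction t)
  case 0 then show ?case by (simp add: Wt_0)
next
  case (Suc t)
  have "Wt (wbreve v) k (int (Suc t)) = Wt (wbreve v) k (int t) * wbreve v k (int t + 1)"
    using Wt_succ[of "int t" "wbreve v" k] by (simp add: add.commute)
  moreover have "wbreve v k (int t + 1) = inverse (v k (-k - int t))"
    by (simp add: wbreve_def)
  moreover have "Wt v k (-k - int (Suc t)) = Wt v k (-k - int t) * inverse (v k (-k - int t))"
    using Wt_pred[of "-k - int t" v k] Suc.prems by (simp add: algebra_simps)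
  ultimately show ?case using Suc by (simp add: algebra_simps)
qed

lemma Wt_id: assumes nz: "\<forall>s t. v s t \<noteq> 0"
  shows "prodc (\<lambda>j. inverse (Wt v (M+1-j) j)) 1 (int L)
     = Wt (wtilde v) (-M) (int L) * prodc (\<lambda>j. inverse (Wt v (M-j) j)) 1 (int L) * Wt v (M - int L) (int L)"
proof (induction L)
  case 0 then show ?case by (simp add: Wt_0 prodc_0)
next
  case (Suc L)
  let ?W = "Wt v (M - int L) (int L)"
  have a: "Wt v (M - int L) (int L + 1) = ?W * v (M - int L) (int L + 1)"
    using Wt_succ[of "int L" v "M - int L"] by simp
  have b: "Wt (wtilde v) (-M) (int L + 1) = Wt (wtilde v) (-M) (int L) * inverse (v (M - int L) (int L + 1))"
    using Wt_succ[of "int L" "wtilde v" "-M"] by (simp add: wtilde_def algebra_simps)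
  have c: "Wt v (M - int (Suc L)) (int (Suc L)) \<noteq> 0" using Wt_nz nz by blast
  have d: "?W \<noteq> 0" using Wt_nz nz by blast
  have e: "v (M - int L) (int L + 1) \<noteq> 0" using nz by blast
  let ?f = "\<lambda>j. inverse (Wt v (M+1-j) j)"
  let ?g = "\<lambda>j. inverse (Wt v (M-j) j)"
  have l: "prodc ?f 1 (int L + 1) = prodc ?f 1 (int L) * inverse (Wt v (M - int L) (int L + 1))"
    using prodc_succ[of "int L" ?f] by simp
  have r: "prodc ?g 1 (int L + 1) = prodc ?g 1 (int L) * inverse (Wt v (M - (int L + 1)) (int L + 1))"
    using prodc_succ[of "int L" ?g] by simp
  have c': "Wt v (M - (int L + 1)) (int L + 1) \<noteq> 0" using Wt_nz nz by blast
  have "prodc ?f 1 (int (Suc L)) = prodc ?f 1 (int L) * inverse (Wt v (M - int L) (int L + 1))"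
    using l by (simp add: add.commute)
  also have "\<dots> = Wt (wtilde v) (-M) (int L) * prodc ?g 1 (int L) * inverse (v (M - int L) (int L + 1))"
    using Suc a d e by (simp add: field_simps)
  also have "\<dots> = Wt (wtilde v) (-M) (int L + 1) * prodc ?g 1 (int L + 1) * Wt v (M - (int L + 1)) (int L + 1)"
    using b r c' by (simp add: field_simps)
  finally show ?case by (simp add: add.commute)
qed

definition cand :: "(int \<Rightarrow> int \<Rightarrow> 'a::field) \<Rightarrow> int \<Rightarrow> int \<Rightarrow> 'a" where
  "cand v n k = (if 0 \<le> n then wpas v (nat n) k
     else if 0 \<le> k then (-1) ^ nat k * wpas (wbreve v) (nat (k - n - 1)) k * prodc (\<lambda>j. Wt v j (- j)) 1 k
     else if k \<le> n then (-1) ^ nat (n - k) * wpas (wtilde v) (nat (- k - 1)) (- n - 1)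
                        * prodc (\<lambda>j. inverse (Wt v (n + 1 - j) j)) 1 (n - k)
     else 0)"

lemma sign_step: "m \<ge> 0 \<Longrightarrow> (-1::'a::field) ^ nat (m + 1) = - ((-1) ^ nat m)"
  by (simp add: nat_add_distrib)

lemma cand_col0: "cand v n 0 = 1"
  by (simp add: cand_def wpas_0 prodc_0)

lemma cand_diag: "cand v n n = 1"
proof (cases "0 \<le> n")
  case True then show ?thesis using wpas_diag[of v "nat n"] by (simp add: cand_def)
next
  case False
  have "wpas (wtilde v) (nat (- n - 1)) (- n - 1) = 1"
    using wpas_diag[of "wtilde v" "nat (-n-1)"] False by simp
  then show ?thesis using False by (simp add: cand_def prodc_0)
qed

lemma rec_pos: "0 \<le> n \<Longrightarrow> cand v (n+1) k = cand v n k + cand v n (k-1) * Wt v k (n + 1 - k)"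
proof -
  assume n: "0 \<le> n"
  have "nat (n+1) = Suc (nat n)" using n by simp
  then show ?thesis using n by (simp add: cand_def)
qed

lemma rec_m1_pos: assumes k: "0 < k"
  shows "cand v 0 k = cand v (-1) k + cand v (-1) (k-1) * Wt v k (-k)"
proof -
  have a: "cand v 0 k = 0" using k by (simp add: cand_def wpas_out)
  have b: "cand v (-1) k = (-1) ^ nat k * prodc (\<lambda>j. Wt v j (- j)) 1 k"
    using k wpas_diag[of "wbreve v" "nat k"] by (simp add: cand_def)
  have c: "cand v (-1) (k-1) = (-1) ^ nat (k-1) * prodc (\<lambda>j. Wt v j (- j)) 1 (k-1)"
    using k wpas_diag[of "wbreve v" "nat (k-1)"] by (simp add: cand_def)
  have d: "prodc (\<lambda>j. Wt v j (- j)) 1 k = prodc (\<lambda>j. Wt v j (- j)) 1 (k-1) * Wt v k (-k)"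
    using prodc_succ[of "k-1" "\<lambda>j. Wt v j (- j)"] k by simp
  have e: "(-1::'a) ^ nat k = - ((-1) ^ nat (k-1))"
    using sign_step[of "k-1"] k by simp
  show ?thesis using a b c d e by simp
qed

lemma rec_m1_neg: assumes nz: "\<forall>s t. v s t \<noteq> 0" and k: "k < 0"
  shows "cand v 0 k = cand v (-1) k + cand v (-1) (k-1) * Wt v k (-k)"
proof -
  let ?Q = "\<lambda>m. prodc (\<lambda>j. inverse (Wt v (-1 + 1 - j) j)) 1 m"
  have a: "cand v 0 k = 0" using k by (simp add: cand_def wpas_out)
  have b: "cand v (-1) k = (-1) ^ nat (-1 - k) * ?Q (-1 - k)"
    using k by (simp add: cand_def wpas_0)
  have c: "cand v (-1) (k-1) = (-1) ^ nat (-1 - (k-1)) * ?Q (-1 - (k-1))"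
    using k by (simp add: cand_def wpas_0)
  have d: "?Q (-1 - (k-1)) = ?Q (-1-k) * inverse (Wt v k (-k))"
    using prodc_succ[of "-1-k" "\<lambda>j. inverse (Wt v (-1 + 1 - j) j)"] k by simp
  have e: "(-1::'a) ^ nat (-1 - (k-1)) = - ((-1) ^ nat (-1-k))"
    using sign_step[of "-1-k"] k by simp
  have f: "Wt v k (-k) \<noteq> 0" using Wt_nz nz by blast
  show ?thesis using a b c d e f by simp
qed

lemma rec_neg_kpos: assumes n: "n + 1 \<le> -1" and k: "1 \<le> k"
  shows "cand v (n+1) k = cand v n k + cand v n (k-1) * Wt v k (n + 1 - k)"
proof -
  let ?N = "n + 1"
  let ?P = "\<lambda>m. prodc (\<lambda>j. Wt v j (- j)) 1 m"
  let ?m = "nat (k - ?N - 1)"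
  let ?X = "wpas (wbreve v) ?m k"
  let ?Y = "wpas (wbreve v) ?m (k-1)"
  have a: "cand v ?N k = (-1) ^ nat k * ?X * ?P k"
    using n k by (simp add: cand_def)
  have nat1: "nat (k - n - 1) = Suc ?m" using n k by simp
  have b0: "wpas (wbreve v) (nat (k - n - 1)) k = ?X + ?Y * Wt (wbreve v) k (-?N)"
    unfolding nat1 using n k by simp
  have b: "cand v n k = (-1) ^ nat k * (?X + ?Y * Wt (wbreve v) k (-?N)) * ?P k"
    using n k b0 by (simp add: cand_def)
  have c: "cand v n (k-1) = (-1) ^ nat (k-1) * ?Y * ?P (k-1)"
    using n k by (simp add: cand_def algebra_simps)
  have d: "?P k = ?P (k-1) * Wt v k (-k)"
    using prodc_succ[of "k-1" "\<lambda>j. Wt v j (- j)"] k by simp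
  have e: "(-1::'a) ^ nat k = - ((-1) ^ nat (k-1))"
    using sign_step[of "k-1"] k by simp
  have f: "Wt (wbreve v) k (-?N) * Wt v k (-k) = Wt v k (n + 1 - k)"
    using Wb_id[of k v "nat (-?N)"] n k by (simp add: algebra_simps)
  show ?thesis unfolding a b c d e using f[symmetric] by (simp add: algebra_simps)
qed

lemma rec_neg_k0: assumes n: "n + 1 \<le> -1"
  shows "cand v (n+1) 0 = cand v n 0 + cand v n (0-1) * Wt v 0 (n + 1 - 0)"
  using n by (simp add: cand_col0 cand_def wpas_0 prodc_0)

lemma rec_neg_mid: assumes n: "n + 1 \<le> -1" and k: "n + 1 < k" "k < 0"
  shows "cand v (n+1) k = cand v n k + cand v n (k-1) * Wt v k (n + 1 - k)"
  using n k by (simp add: cand_def)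

lemma rec_neg_diag: assumes n: "n + 1 \<le> -1"
  shows "cand v (n+1) (n+1) = cand v n (n+1) + cand v n (n+1-1) * Wt v (n+1) (n + 1 - (n+1))"
  using n by (simp add: cand_diag Wt_0) (simp add: cand_def)

lemma rec_neg_low: assumes nz: "\<forall>s t. v s t \<noteq> 0" and n: "n + 1 \<le> -1" and k: "k \<le> n"
  shows "cand v (n+1) k = cand v n k + cand v n (k-1) * Wt v k (n + 1 - k)"
proof -
  let ?N = "n + 1"
  let ?m = "nat (- k - 1)"
  let ?A = "wpas (wtilde v) ?m (-n-1)"
  let ?B = "wpas (wtilde v) ?m (-?N-1)"
  let ?Qn = "\<lambda>m. prodc (\<lambda>j. inverse (Wt v (n + 1 - j) j)) 1 m"
  let ?QN = "prodc (\<lambda>j. inverse (Wt v (?N + 1 - j) j)) 1 (?N - k)"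
  let ?s = "(-1::'a) ^ nat (n - k)"
  have s1: "(-1::'a) ^ nat (?N - k) = - ?s" using sign_step[of "n-k"] n k by (simp add: algebra_simps)
  have s2: "(-1::'a) ^ nat (n - (k - 1)) = - ?s" using sign_step[of "n-k"] n k by (simp add: algebra_simps)
  have a: "cand v ?N k = - ?s * ?B * ?QN"
    using n k s1 by (simp add: cand_def)
  have b: "cand v n k = ?s * ?A * ?Qn (n - k)"
    using n k by (simp add: cand_def)
  have nat1: "nat (- (k - 1) - 1) = Suc ?m" using n k by simp
  have c0: "wpas (wtilde v) (nat (- (k - 1) - 1)) (- n - 1) = ?A + ?B * Wt (wtilde v) (-n-1) (n - k + 1)"
    unfolding nat1 using n k by (simp add: algebra_simps)
  have c: "cand v n (k-1) = - ?s * (?A + ?B * Wt (wtilde v) (-n-1) (n - k + 1)) * ?Qn (n - k + 1)"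
    using n k c0 s2 by (simp add: cand_def algebra_simps)
  have d: "?Qn (n - k + 1) = ?Qn (n - k) * inverse (Wt v k (n - k + 1))"
    using prodc_succ[of "n-k" "\<lambda>j. inverse (Wt v (n + 1 - j) j)"] n k by simp
  have f: "Wt v k (n - k + 1) \<noteq> 0" using Wt_nz nz by blast
  have g0: "int (nat (n - k + 1)) = n - k + 1" using k by simp
  have g1: "n + 1 - (n - k + 1) = k" by simp
  have g2: "- (n + 1) = -n-1" by simp
  have g3: "n + 1 - k = n - k + 1" by simp
  have g: "?QN = Wt (wtilde v) (-n-1) (n - k + 1) * ?Qn (n - k + 1) * Wt v k (n - k + 1)"
    using Wt_id[OF nz, of ?N "nat (n - k + 1)"] unfolding g0 g1 g2 g3 .
  show ?thesis unfolding a b c g d using f by (simp add: field_simps)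
qed

lemma cand_is: assumes nz: "\<forall>s t. v s t \<noteq> 0" shows "is_wbinom v (cand v)"
  unfolding is_wbinom_def
proof (intro conjI allI impI)
  fix n show "cand v n 0 = 1" by (rule cand_col0)
next
  fix n show "cand v n n = 1" by (rule cand_diag)
next
  fix n k :: int assume nk: "(n + 1, k) \<noteq> (0, 0)"
  show "cand v (n + 1) k = cand v n k + cand v n (k - 1) * Wt v k (n + 1 - k)"
  proof (cases "0 \<le> n")
    case True then show ?thesis by (rule rec_pos)
  next
    case False
    show ?thesis
    proof (cases "n = -1")
      case True
      then have k: "k \<noteq> 0" using nk by simp
      show ?thesis
      proof (cases "0 < k")
        case True then show ?thesis using rec_m1_pos[OF True, of v] \<open>n = -1\<close> by simp
      next
        case False then have "k < 0" using k by simp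
        then show ?thesis using rec_m1_neg[OF nz \<open>k < 0\<close>] \<open>n = -1\<close> by simp
      qed
    next
      case False
      then have n: "n + 1 \<le> -1" using \<open>\<not> 0 \<le> n\<close> by simp
      consider "1 \<le> k" | "k = 0" | "n + 1 < k \<and> k < 0" | "k = n + 1" | "k \<le> n" by linarith
      then show ?thesis
      proof cases
        case 1 then show ?thesis using rec_neg_kpos[OF n] by blast
      next
        case 2 then show ?thesis using rec_neg_k0[OF n] by simp
      next
        case 3 then show ?thesis using rec_neg_mid[OF n] by blast
      next
        case 4 then show ?thesis using rec_neg_diag[OF n] by simp
      next
        case 5 then show ?thesis using rec_neg_low[OF nz n] by blast
      qed
    qed
  qed
qed

lemma uniq: assumes nz: "\<forall>s t. v s t \<noteq> 0" and B1: "is_wbinom v B1" and B2: "is_wbinom v B2"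
  shows "B1 = B2"
proof -
  define D where "D n k = B1 n k - B2 n k" for n k
  have D0: "D n 0 = 0" for n using B1 B2 by (simp add: D_def is_wbinom_def)
  have Dd: "D n n = 0" for n using B1 B2 by (simp add: D_def is_wbinom_def)
  have Dr: "D (n+1) k = D n k + D n (k-1) * Wt v k (n + 1 - k)" if "(n+1,k) \<noteq> (0,0)" for n k
  proof -
    have "B1 (n+1) k = B1 n k + B1 n (k-1) * Wt v k (n + 1 - k)" using B1 that unfolding is_wbinom_def by blast
    moreover have "B2 (n+1) k = B2 n k + B2 n (k-1) * Wt v k (n + 1 - k)" using B2 that unfolding is_wbinom_def by blast
    ultimately show ?thesis unfolding D_def by (simp add: algebra_simps)
  qed
  have neg: "\<forall>n. D n (- int j) = 0" for j
  proof (induction j)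
    case 0 then show ?case using D0 by simp
  next
    case (Suc j)
    show ?case
    proof
      fix n
      show "D n (- int (Suc j)) = 0"
      proof (cases "(n+1, - int j) = (0,0)")
        case True then have "n = -1" "j = 0" by auto
        then show ?thesis using Dd[of "-1"] by simp
      next
        case False
        have "D (n+1) (- int j) = D n (- int j) + D n (- int j - 1) * Wt v (- int j) (n + 1 - (- int j))"
          using Dr[OF False] .
        then have "D n (- int j - 1) * Wt v (- int j) (n + 1 - (- int j)) = 0" using Suc.IH by simp
        moreover have "Wt v (- int j) (n + 1 - (- int j)) \<noteq> 0" using Wt_nz nz by blast
        ultimately have z: "D n (- int j - 1) = 0" by simp
        have m: "- int (Suc j) = - int j - 1" by simp
        show ?thesis using z by (simp only: m)
      qed
    qed
  qed
  have pos: "\<forall>n. D n (int j) = 0" for j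
  proof (induction j)
    case 0 then show ?case using D0 by simp
  next
    case (Suc j)
    have st: "D (n+1) (int j + 1) = D n (int j + 1)" for n
      using Dr[of n "int j + 1"] Suc.IH by simp
    show ?case
    proof
      fix n
      have "D n (int j + 1) = 0"
      proof (induction n rule: int_induct[where k = "int j + 1"])
        case base then show ?case using Dd by simp
      next
        case (step1 i) then show ?case using st[of i] by simp
      next
        case (step2 i) then show ?case using st[of "i - 1"] by simp
      qed
      then show "D n (int (Suc j)) = 0" by (simp add: add.commute)
    qed
  qed
  have "D n k = 0" for n k
  proof (cases "0 \<le> k")
    case True then show ?thesis using pos[of "nat k"] by simp
  next
    case False then show ?thesis using neg[of "nat (-k)"] by simp
  qed
  then show ?thesis unfolding D_def by (intro ext) (simp)
qed

lemma wbinom_cand: assumes nz: "\<forall>s t. v s t \<noteq> 0" shows "wbinom v = cand v"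
  unfolding wbinom_def
proof (rule the_equality)
  show "is_wbinom v (cand v)" by (rule cand_is[OF nz])
  fix B assume "is_wbinom v B" then show "B = cand v" using uniq[OF nz] cand_is[OF nz] by blast
qed

theorem proposition1:
  fixes w :: "int \<Rightarrow> int \<Rightarrow> 'a::field" and n k :: int
  assumes "\<forall>s t. w s t \<noteq> 0"
  shows "(0 \<le> k \<and> k \<le> n \<longrightarrow> wbinom w n k = wbinom w n k)
    \<and> (n < 0 \<and> 0 \<le> k \<longrightarrow>
         wbinom w n k = (-1) ^ nat k * wbinom (wbreve w) (k - n - 1) k
                        * prodc (\<lambda>j. Wt w j (- j)) 1 k)
    \<and> (k \<le> n \<and> n < 0 \<longrightarrow>
         wbinom w n k = (-1) ^ nat (n - k) * wbinom (wtilde w) (- k - 1) (- n - 1)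
                        * prodc (\<lambda>j. inverse (Wt w (n + 1 - j) j)) 1 (n - k))
    \<and> (0 \<le> n \<and> n < k \<longrightarrow> wbinom w n k = 0)
    \<and> (n < k \<and> k < 0 \<longrightarrow> wbinom w n k = 0)
    \<and> (k < 0 \<and> 0 \<le> n \<longrightarrow> wbinom w n k = 0)"
proof -
  have nzb: "\<forall>s t. wbreve w s t \<noteq> 0" using assms by (simp add: wbreve_def)
  have nzt: "\<forall>s t. wtilde w s t \<noteq> 0" using assms by (simp add: wtilde_def)
  note e = wbinom_cand[OF assms] wbinom_cand[OF nzb] wbinom_cand[OF nzt]
  show ?thesis unfolding e
    by (auto simp: cand_def wpas_out)
qed

end
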